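(* Let $\alpha>0$, let $\mathscr{K}$ be a convex feasible functional, and consider the augmented dual ascent scheme $$x^{n+1} = \operatorname{arg\,min}_{x} \mathscr{K}(x)+\langle x,\Lambda^n\rangle +\frac{\alpha}{2}\|x\|^2,\qquad \Lambda^{n+1} = \Lambda^{n} + \alpha\mathcal{P}_{\mathcal{M}^\perp}(x^{n+1}),\qquad \Lambda^0=0.$$ Define $\mathscr{J}(x)=\mathscr{K}(x)+\frac{\alpha}{2}\|\mathcal{P}_{\mathcal{M}}x\|^2$ and $h:\mathcal{H}\to\mathbb{R}$ by $h(\Lambda)=\min_x \mathscr{J}(x)+\langle x,\mathcal{P}_{\mathcal{M}^\perp}\Lambda\rangle=-\mathscr{J}^*(-\mathcal{P}_{\mathcal{M}^\perp}\Lambda)$. If $h$ attains its supremum, then $(\Lambda^{n})_{n=1}^\infty$ is a bounded sequence. In particular, this happens if $\mathscr{K}$ is a feasible finite-valued functional.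
   Context: $\mathcal{H}$ is a finite dimensional Hilbert space, $\mathcal{M}\subset\mathcal{H}$ a linear subspace, $\mathcal{P}_{\mathcal{M}}$, $\mathcal{P}_{\mathcal{M}^\perp}$ the orthogonal projections onto $\mathcal{M}$, $\mathcal{M}^\perp$. $\mathscr{J}^*$ denotes the Fenchel conjugate. A functional is called feasible if it is lower semi-continuous, proper, bounded below, and satisfies $\lim_{\|x\|\rightarrow\infty}\mathscr{K}(x)/\|x\|=\infty$. *)

theory Defs
  imports "HOL-Analysis.Analysis"
begin

definition orth_comp :: "'a::real_inner set \<Rightarrow> 'a set" where
  "orth_comp M = {y. \<forall>z\<in>M. inner y z = 0}"

definition orth_proj :: "'a::real_inner set \<Rightarrow> 'a \<Rightarrow> 'a" where
  "orth_proj M x = (THE y. y \<in> M \<and> (\<forall>z\<in>M. inner (x - y) z = 0))"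

definition lsc_fun :: "('a::topological_space \<Rightarrow> ereal) \<Rightarrow> bool" where
  "lsc_fun K \<longleftrightarrow> (\<forall>x s. s \<longlonglongrightarrow> x \<longrightarrow> K x \<le> liminf (\<lambda>n. K (s n)))"

definition proper_fun :: "('a \<Rightarrow> ereal) \<Rightarrow> bool" where
  "proper_fun K \<longleftrightarrow> (\<forall>x. K x \<noteq> -\<infinity>) \<and> (\<exists>x. K x \<noteq> \<infinity>)"

definition bounded_below_fun :: "('a \<Rightarrow> ereal) \<Rightarrow> bool" where
  "bounded_below_fun K \<longleftrightarrow> (\<exists>c::real. \<forall>x. ereal c \<le> K x)"

text \<open>lim_{||x|| -> infinity} K(x)/||x|| = infinity, unfolded.\<close>
definition superlinear_fun :: "('a::real_normed_vector \<Rightarrow> ereal) \<Rightarrow> bool" where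
  "superlinear_fun K \<longleftrightarrow> (\<forall>C::real. \<exists>R::real. \<forall>x. R \<le> norm x \<longrightarrow> ereal (C * norm x) \<le> K x)"

definition feasible :: "('a::real_normed_vector \<Rightarrow> ereal) \<Rightarrow> bool" where
  "feasible K \<longleftrightarrow> lsc_fun K \<and> proper_fun K \<and> bounded_below_fun K \<and> superlinear_fun K"

definition convex_fun :: "('a::real_vector \<Rightarrow> ereal) \<Rightarrow> bool" where
  "convex_fun K \<longleftrightarrow> (\<forall>x y (t::real). 0 \<le> t \<and> t \<le> 1 \<longrightarrow>
      K ((1 - t) *\<^sub>R x + t *\<^sub>R y) \<le> ereal (1 - t) * K x + ereal t * K y)"

definition dual_h :: "('a::real_inner \<Rightarrow> ereal) \<Rightarrow> real \<Rightarrow> 'a set \<Rightarrow> 'a \<Rightarrow> ereal" where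
  "dual_h K \<alpha> M \<Lambda> = (INF x. K x + ereal (\<alpha> / 2 * (norm (orth_proj M x))\<^sup>2
                                    + inner x (orth_proj (orth_comp M) \<Lambda>)))"

end

theory Submission
  imports Defs
begin


lemma proj_ex:
  fixes S :: "'a::euclidean_space set"
  assumes "subspace S"
  shows "\<exists>!y. y \<in> S \<and> (\<forall>z\<in>S. inner (x - y) z = 0)"
proof -
  obtain y z where y: "y \<in> span S" and z: "\<And>w. w \<in> span S \<Longrightarrow> orthogonal z w" and xyz: "x = y + z"
    using orthogonal_subspace_decomp_exists by blast
  have sp: "span S = S" using assms by (simp add: span_eq_iff)
  have ex: "y \<in> S \<and> (\<forall>z\<in>S. inner (x - y) z = 0)"
    using y z xyz sp by (auto simp: orthogonal_def)
  show ?thesis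
  proof (rule ex1I[of _ y])
    show "y \<in> S \<and> (\<forall>z\<in>S. inner (x - y) z = 0)" by (rule ex)
  next
    fix y' assume h: "y' \<in> S \<and> (\<forall>z\<in>S. inner (x - y') z = 0)"
    have d: "y - y' \<in> S" using h ex assms by (simp add: subspace_diff)
    have "inner (x - y') (y - y') = 0" "inner (x - y) (y - y') = 0" using h ex d by auto
    then have "inner (y - y') (y - y') = 0"
      by (simp add: inner_diff_left inner_diff_right inner_commute)
    then show "y' = y" by simp
  qed
qed

lemma proj_prop:
  fixes S :: "'a::euclidean_space set"
  assumes "subspace S"
  shows "orth_proj S x \<in> S" "\<And>z. z \<in> S \<Longrightarrow> inner (x - orth_proj S x) z = 0"
  using theI'[OF proj_ex[OF assms, of x]] unfolding orth_proj_def by auto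

lemma proj_unique:
  fixes S :: "'a::euclidean_space set"
  assumes "subspace S" "y \<in> S" "\<And>z. z \<in> S \<Longrightarrow> inner (x - y) z = 0"
  shows "orth_proj S x = y"
  unfolding orth_proj_def
  by (rule the1_equality[OF proj_ex[OF assms(1)]]) (use assms(2,3) in blast)

lemma subspace_orth_comp: "subspace (orth_comp (M::'a::real_inner set))"
  unfolding subspace_def orth_comp_def by (auto simp: inner_add_left)

lemma proj_id:
  fixes S :: "'a::euclidean_space set"
  assumes "subspace S" "z \<in> S" shows "orth_proj S z = z"
  using proj_unique[OF assms] by simp

lemma proj_comp:
  fixes M :: "'a::euclidean_space set"
  assumes "subspace M"
  shows "orth_proj (orth_comp M) x = x - orth_proj M x"
proof (rule proj_unique[OF subspace_orth_comp])
  show "x - orth_proj M x \<in> orth_comp M"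
    using proj_prop[OF assms] unfolding orth_comp_def by auto
  fix z assume "z \<in> orth_comp M"
  moreover have "orth_proj M x \<in> M" using proj_prop[OF assms] by blast
  ultimately have "inner z (orth_proj M x) = 0" unfolding orth_comp_def by blast
  then show "inner (x - (x - orth_proj M x)) z = 0" by (simp add: inner_commute)
qed

lemma proj_add:
  fixes M :: "'a::euclidean_space set"
  assumes "subspace M"
  shows "orth_proj M (x + y) = orth_proj M x + orth_proj M y"
proof (rule proj_unique[OF assms])
  show "orth_proj M x + orth_proj M y \<in> M"
    using proj_prop(1)[OF assms] assms by (simp add: subspace_add)
  fix z assume z: "z \<in> M"
  have "inner (x - orth_proj M x) z = 0" "inner (y - orth_proj M y) z = 0"
    using proj_prop(2)[OF assms z] by blast+
  moreover have "x + y - (orth_proj M x + orth_proj M y) = (x - orth_proj M x) + (y - orth_proj M y)"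
    by (rule add_diff_add)
  ultimately show "inner (x + y - (orth_proj M x + orth_proj M y)) z = 0"
    by (simp only: inner_add_left)
qed

lemma proj_scale:
  fixes M :: "'a::euclidean_space set"
  assumes "subspace M"
  shows "orth_proj M (c *\<^sub>R x) = c *\<^sub>R orth_proj M x"
proof (rule proj_unique[OF assms])
  show "c *\<^sub>R orth_proj M x \<in> M"
    using proj_prop(1)[OF assms] assms by (simp add: subspace_scale)
  fix z assume z: "z \<in> M"
  have "inner (x - orth_proj M x) z = 0" using proj_prop(2)[OF assms z] by blast
  moreover have "c *\<^sub>R x - c *\<^sub>R orth_proj M x = c *\<^sub>R (x - orth_proj M x)"
    by (simp add: scaleR_right_diff_distrib)
  ultimately show "inner (c *\<^sub>R x - c *\<^sub>R orth_proj M x) z = 0"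
    by (simp only: inner_scaleR_left)
qed

lemma proj_inner:
  fixes M :: "'a::euclidean_space set"
  assumes "subspace M"
  shows "inner (orth_proj M x) (orth_proj M d) = inner (orth_proj M x) d"
proof -
  have "inner (d - orth_proj M d) (orth_proj M x) = 0" using proj_prop[OF assms] by blast
  then have "inner (orth_proj M x) (d - orth_proj M d) = 0" by (simp add: inner_commute)
  then show ?thesis by (simp add: inner_diff_right)
qed

lemma small_t:
  fixes c k :: real
  assumes "k \<ge> 0" "\<And>t. 0 < t \<Longrightarrow> t \<le> 1 \<Longrightarrow> 0 \<le> c + t * k"
  shows "0 \<le> c"
proof (rule ccontr)
  assume nc: "\<not> 0 \<le> c"
  define s where "s = - c / (2 * (k + 1))"
  define t where "t = min 1 s"
  have s0: "0 < s" unfolding s_def using nc assms(1) by (intro divide_pos_pos) auto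
  have t0: "0 < t" "t \<le> 1" using s0 by (auto simp: t_def)
  have "t * k \<le> s * k" using assms(1) by (intro mult_right_mono) (auto simp: t_def)
  also have "s * k = (- c / 2) * (k / (k + 1))" unfolding s_def by simp
  also have "\<dots> \<le> (- c / 2) * 1"
    using nc assms(1) by (intro mult_left_mono) auto
  finally have "c + t * k < 0" using nc by linarith
  with assms(2)[OF t0] show False by linarith
qed



lemma sq_expand:
  fixes x d :: "'a::real_inner"
  shows "(norm (x + t *\<^sub>R d))\<^sup>2 = (norm x)\<^sup>2 + 2 * t * inner x d + t\<^sup>2 * (norm d)\<^sup>2"
proof -
  have "(norm (x + t *\<^sub>R d))\<^sup>2 = inner (x + t *\<^sub>R d) (x + t *\<^sub>R d)" by (rule power2_norm_eq_inner)
  also have "\<dots> = inner x x + 2 * t * inner x d + t\<^sup>2 * inner d d"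
    by (simp add: inner_add_left inner_add_right inner_commute power2_eq_square)
  finally show ?thesis by (simp add: power2_norm_eq_inner)
qed

lemma sq_lower:
  fixes u v :: "'a::real_inner"
  shows "(norm v)\<^sup>2 + 2 * inner v (u - v) \<le> (norm u)\<^sup>2"
proof -
  have "0 \<le> inner (u - v) (u - v)" by simp
  also have "inner (u - v) (u - v) = inner u u - 2 * inner v u + inner v v"
    by (simp add: inner_diff_left inner_diff_right inner_commute)
  finally show ?thesis by (simp add: power2_norm_eq_inner inner_diff_right inner_commute)
qed

lemma lin2:
  fixes \<alpha> X D q a b l s t :: real
  assumes "a + (s + \<alpha> / 2 * X) \<le> (1 - t) * a + t * b + (s + t * l + \<alpha> / 2 * (X + 2 * t * q + t\<^sup>2 * D))"
  shows "0 \<le> t * ((b - a + l + \<alpha> * q) + t * (\<alpha> / 2 * D))"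
proof -
  have "t * ((b - a + l + \<alpha> * q) + t * (\<alpha> / 2 * D)) = (1 - t) * a + t * b + (s + t * l + \<alpha> / 2 * (X + 2 * t * q + t\<^sup>2 * D)) - (a + (s + \<alpha> / 2 * X))"
    by (simp add: algebra_simps power2_eq_square)
  then show ?thesis using assms by linarith
qed

lemma lin_aux:
  fixes \<alpha> A B p q a b l s :: real
  assumes "\<alpha> * A + \<alpha> * (2 * p) \<le> \<alpha> * B" "0 \<le> b - a + l + \<alpha> * q"
  shows "a + (\<alpha> / 2 * A + s) \<le> b + (\<alpha> / 2 * B + (s + l + \<alpha> * (q - p)))"
  using assms by (simp add: algebra_simps)

lemma transfer_min:
  fixes K :: "'a::euclidean_space \<Rightarrow> ereal" and x lam y :: 'a
  assumes M: "subspace M" and al: "\<alpha> > 0" and cv: "convex_fun K" and Kx: "K x = ereal a"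
    and mn: "\<And>y. K x + ereal (inner x lam + \<alpha> / 2 * (norm x)\<^sup>2) \<le> K y + ereal (inner y lam + \<alpha> / 2 * (norm y)\<^sup>2)"
    and nm: "\<And>y. K y \<noteq> -\<infinity>"
  shows "K x + ereal (\<alpha> / 2 * (norm (orth_proj M x))\<^sup>2 + inner x (lam + \<alpha> *\<^sub>R orth_proj (orth_comp M) x))
       \<le> K y + ereal (\<alpha> / 2 * (norm (orth_proj M y))\<^sup>2 + inner y (lam + \<alpha> *\<^sub>R orth_proj (orth_comp M) x))"
proof (cases "K y = \<infinity>")
  case True then show ?thesis by simp
next
  case False
  then obtain b where Ky: "K y = ereal b" using nm[of y] by (cases "K y") auto
  define d where "d = y - x"
  define c where "c = b - a + inner d lam + \<alpha> * inner x d"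
  define k where "k = \<alpha> / 2 * (norm d)\<^sup>2"
  have cvr: "\<And>x y t. 0 \<le> t \<and> t \<le> 1 \<Longrightarrow> K ((1 - t) *\<^sub>R x + t *\<^sub>R y) \<le> ereal (1 - t) * K x + ereal t * K y"
    using cv unfolding convex_fun_def by blast
  have c0: "0 \<le> c"
  proof (rule small_t)
    show "0 \<le> k" using al by (simp add: k_def)
    fix t :: real assume t: "0 < t" "t \<le> 1"
    define yt where "yt = x + t *\<^sub>R d"
    have yt': "yt = (1 - t) *\<^sub>R x + t *\<^sub>R y" by (simp add: yt_def d_def algebra_simps)
    have "K yt \<le> ereal (1 - t) * K x + ereal t * K y"
      unfolding yt' by (rule cvr) (use t in simp)
    also have "\<dots> = ereal ((1 - t) * a + t * b)" by (simp add: Kx Ky)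
    finally have Kyt: "K yt \<le> ereal ((1 - t) * a + t * b)" .
    have "ereal (a + (inner x lam + \<alpha> / 2 * (norm x)\<^sup>2)) \<le> K yt + ereal (inner yt lam + \<alpha> / 2 * (norm yt)\<^sup>2)"
      using mn[of yt] Kx by simp
    also have "\<dots> \<le> ereal ((1 - t) * a + t * b) + ereal (inner yt lam + \<alpha> / 2 * (norm yt)\<^sup>2)"
      using Kyt by (rule add_right_mono)
    finally have F: "a + (inner x lam + \<alpha> / 2 * (norm x)\<^sup>2) \<le> (1 - t) * a + t * b + (inner yt lam + \<alpha> / 2 * (norm yt)\<^sup>2)"
      by simp
    have e1: "inner yt lam = inner x lam + t * inner d lam" by (simp add: yt_def inner_add_left)
    have e2: "(norm yt)\<^sup>2 = (norm x)\<^sup>2 + 2 * t * inner x d + t\<^sup>2 * (norm d)\<^sup>2" unfolding yt_def by (rule sq_expand)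
    have F2: "a + (inner x lam + \<alpha> / 2 * (norm x)\<^sup>2) \<le> (1 - t) * a + t * b + (inner x lam + t * inner d lam + \<alpha> / 2 * ((norm x)\<^sup>2 + 2 * t * inner x d + t\<^sup>2 * (norm d)\<^sup>2))"
      using F unfolding e1 e2 .
    have "0 \<le> t * (c + t * k)"
      unfolding c_def k_def by (rule lin2[OF F2])
    then show "0 \<le> c + t * k" using t by (simp add: zero_le_mult_iff)
  qed
  let ?P = "orth_proj M" and ?Q = "orth_proj (orth_comp M)"
  have "(norm (?P x))\<^sup>2 + 2 * inner (?P x) (?P y - ?P x) \<le> (norm (?P y))\<^sup>2" by (rule sq_lower)
  moreover have "?P y - ?P x = ?P d"
    using proj_add[OF M, of x d] by (simp add: d_def)
  moreover have "inner (?P x) (?P d) = inner (?P x) d" by (rule proj_inner[OF M])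
  ultimately have n: "(norm (?P x))\<^sup>2 + 2 * inner (?P x) d \<le> (norm (?P y))\<^sup>2" by simp
  have Q: "?Q x = x - ?P x" by (rule proj_comp[OF M])
  have yeq: "y = x + d" by (simp add: d_def)
  have "a + (\<alpha> / 2 * (norm (?P x))\<^sup>2 + inner x (lam + \<alpha> *\<^sub>R ?Q x))
      \<le> b + (\<alpha> / 2 * (norm (?P y))\<^sup>2 + inner y (lam + \<alpha> *\<^sub>R ?Q x))"
  proof -
    have e: "inner y (lam + \<alpha> *\<^sub>R ?Q x) = inner x (lam + \<alpha> *\<^sub>R ?Q x) + inner d lam + \<alpha> * (inner d x - inner d (?P x))"
      unfolding yeq Q by (simp add: inner_add_left inner_add_right inner_diff_right algebra_simps)
    have "\<alpha> * (norm (?P x))\<^sup>2 + \<alpha> * (2 * inner (?P x) d) \<le> \<alpha> * (norm (?P y))\<^sup>2"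
      using mult_left_mono[OF n, of \<alpha>] al by (simp add: algebra_simps)
    then have H: "\<alpha> * (norm (?P x))\<^sup>2 + \<alpha> * (2 * inner (?P x) d) \<le> \<alpha> * (norm (?P y))\<^sup>2" .
    have ic2: "inner d x = inner x d" by (rule inner_commute)
    have c0': "0 \<le> b - a + inner d lam + \<alpha> * inner d x" using c0 unfolding c_def ic2 .
    have ic: "inner d (?P x) = inner (?P x) d" by (rule inner_commute)
    show ?thesis unfolding e ic by (rule lin_aux[OF H c0'])

  qed
  then show ?thesis by (simp add: Kx Ky)
qed



lemma part1:
  fixes K :: "'a::euclidean_space \<Rightarrow> ereal"
    and M :: "'a set" and \<alpha> :: real and x \<Lambda> :: "nat \<Rightarrow> 'a"
  assumes M: "subspace M" and al: "\<alpha> > 0" and cv: "convex_fun K" and pr: "proper_fun K"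
    and L0: "\<Lambda> 0 = 0"
    and mn: "\<And>n y. K (x (Suc n)) + ereal (inner (x (Suc n)) (\<Lambda> n) + \<alpha> / 2 * (norm (x (Suc n)))\<^sup>2)
                 \<le> K y + ereal (inner y (\<Lambda> n) + \<alpha> / 2 * (norm y)\<^sup>2)"
    and up: "\<And>n. \<Lambda> (Suc n) = \<Lambda> n + \<alpha> *\<^sub>R orth_proj (orth_comp M) (x (Suc n))"
    and mx: "\<And>\<Lambda>'. dual_h K \<alpha> M \<Lambda>' \<le> dual_h K \<alpha> M \<Lambda>0"
  shows "bounded (range (\<lambda>n. \<Lambda> (Suc n)))"
proof -
  let ?N = "orth_comp M" and ?P = "orth_proj M" and ?Q = "orth_proj (orth_comp M)"
  have N: "subspace ?N" by (rule subspace_orth_comp)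
  have inN: "\<Lambda> n \<in> ?N" for n
    by (induction n) (auto simp: L0 up subspace_0[OF N] subspace_add[OF N] subspace_scale[OF N] proj_prop(1)[OF N])
  define L where "L = ?Q \<Lambda>0"
  have LN: "L \<in> ?N" unfolding L_def by (rule proj_prop(1)[OF N])
  have nm: "K y \<noteq> -\<infinity>" for y using pr unfolding proper_fun_def by auto
  obtain y0 where y0: "K y0 \<noteq> \<infinity>" using pr unfolding proper_fun_def by auto
  have step: "norm (\<Lambda> (Suc n) - L) \<le> norm (\<Lambda> n - L)" for n
  proof -
    define z where "z = x (Suc n)"
    define w where "w = ?Q z"
    obtain c where c: "K y0 = ereal c" using y0 nm[of y0] by (cases "K y0") auto
    have "K z \<noteq> \<infinity>"
    proof
      assume inf: "K z = \<infinity>"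
      have "K z + ereal (inner z (\<Lambda> n) + \<alpha> / 2 * (norm z)\<^sup>2) \<le> K y0 + ereal (inner y0 (\<Lambda> n) + \<alpha> / 2 * (norm y0)\<^sup>2)"
        unfolding z_def by (rule mn)
      then show False unfolding inf c by simp
    qed
    then obtain a where Kz: "K z = ereal a" using nm[of z] by (cases "K z") auto
    have G: "\<And>y. K z + ereal (\<alpha> / 2 * (norm (?P z))\<^sup>2 + inner z (\<Lambda> (Suc n)))
       \<le> K y + ereal (\<alpha> / 2 * (norm (?P y))\<^sup>2 + inner y (\<Lambda> (Suc n)))"
      unfolding up z_def[symmetric]
      by (rule transfer_min[OF M al cv Kz _ nm]) (use mn[of n] z_def in auto)
    have QS: "?Q (\<Lambda> (Suc n)) = \<Lambda> (Suc n)" by (rule proj_id[OF N inN])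
    have "K z + ereal (\<alpha> / 2 * (norm (?P z))\<^sup>2 + inner z (\<Lambda> (Suc n))) \<le> dual_h K \<alpha> M (\<Lambda> (Suc n))"
      unfolding dual_h_def QS by (rule INF_greatest) (rule G)
    also have "\<dots> \<le> dual_h K \<alpha> M \<Lambda>0" by (rule mx)
    also have "\<dots> \<le> K z + ereal (\<alpha> / 2 * (norm (?P z))\<^sup>2 + inner z L)"
      unfolding dual_h_def L_def by (rule INF_lower) simp
    finally have i1: "inner z (\<Lambda> (Suc n)) \<le> inner z L" by (simp add: Kz)
    have dN: "L - \<Lambda> (Suc n) \<in> ?N" using LN inN subspace_diff[OF N] by blast
    have "inner (z - w) (L - \<Lambda> (Suc n)) = 0" unfolding w_def by (rule proj_prop(2)[OF N dN])
    then have "inner w (L - \<Lambda> (Suc n)) = inner z (L - \<Lambda> (Suc n))" by (simp add: inner_diff_left)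
    also have "\<dots> \<ge> 0" using i1 by (simp add: inner_diff_right)
    finally have w0: "0 \<le> inner w (L - \<Lambda> (Suc n))" .
    define u where "u = \<Lambda> n - L"
    define v where "v = \<Lambda> (Suc n) - L"
    have vu: "v - u = \<alpha> *\<^sub>R w" by (simp add: u_def v_def up z_def w_def)
    have "0 \<le> \<alpha> * inner w (L - \<Lambda> (Suc n))" using w0 al by simp
    then have vv: "inner v (v - u) \<le> 0" unfolding vu by (simp add: v_def inner_commute algebra_simps)
    have "(norm v)\<^sup>2 \<le> (norm u)\<^sup>2"
    proof -
      have s1: "(norm v)\<^sup>2 + 2 * inner v (u - v) \<le> (norm u)\<^sup>2" by (rule sq_lower)
      have "inner v (u - v) = - inner v (v - u)" by (simp add: inner_diff_right)
      with s1 vv show ?thesis by linarith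
    qed
    then show ?thesis unfolding u_def v_def by (simp add: power2_le_iff_abs_le)
  qed
  have bd: "norm (\<Lambda> n - L) \<le> norm L" for n
  proof (induction n)
    case 0 then show ?case by (simp add: L0)
  next
    case (Suc n) then show ?case using step[of n] by linarith
  qed
  have "norm (\<Lambda> n) \<le> 2 * norm L" for n
    using bd[of n] norm_triangle_ineq[of "\<Lambda> n - L" L] by simp
  then show ?thesis unfolding bounded_iff by blast
qed



lemma norm_sq_convex:
  fixes a b :: "'a::real_inner" and t :: real
  assumes "0 \<le> t" "t \<le> 1"
  shows "(norm ((1 - t) *\<^sub>R a + t *\<^sub>R b))\<^sup>2 \<le> (1 - t) * (norm a)\<^sup>2 + t * (norm b)\<^sup>2"
proof -
  have eq: "(1 - t) * (norm a)\<^sup>2 + t * (norm b)\<^sup>2 - (norm ((1 - t) *\<^sub>R a + t *\<^sub>R b))\<^sup>2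
      = t * (1 - t) * (norm (a - b))\<^sup>2"
    by (simp add: power2_norm_eq_inner inner_add_left inner_add_right inner_diff_left inner_diff_right inner_commute)
       (simp add: algebra_simps power2_eq_square)
  have "0 \<le> t * (1 - t) * (norm (a - b))\<^sup>2" using assms by simp
  then show ?thesis using eq by linarith
qed

lemma lin3:
  fixes kw k1 k2 c Nw N1 N2 t :: real
  assumes "kw \<le> (1 - t) * k1 + t * k2" "c * Nw \<le> c * ((1 - t) * N1 + t * N2)"
  shows "kw + c * Nw \<le> (1 - t) * (k1 + c * N1) + t * (k2 + c * N2)"
proof -
  have "(1 - t) * (k1 + c * N1) + t * (k2 + c * N2) = ((1 - t) * k1 + t * k2) + c * ((1 - t) * N1 + t * N2)"
    by (simp add: algebra_simps)
  then show ?thesis using assms by linarith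
qed

lemma part2:
  fixes K :: "'a::euclidean_space \<Rightarrow> ereal"
  assumes M: "subspace M" and al: "\<alpha> > 0" and cv: "convex_fun K" and bb: "bounded_below_fun K"
    and fin: "\<And>z. K z \<noteq> \<infinity>" and nm: "\<And>z. K z \<noteq> -\<infinity>"
  shows "\<exists>\<Lambda>0. \<forall>\<Lambda>'. dual_h K \<alpha> M \<Lambda>' \<le> dual_h K \<alpha> M \<Lambda>0"
proof -
  let ?P = "orth_proj M" and ?Q = "orth_proj (orth_comp M)" and ?N = "orth_comp M"
  have N: "subspace ?N" by (rule subspace_orth_comp)
  define kr where "kr z = real_of_ereal (K z)" for z
  have Kr: "K z = ereal (kr z)" for z using fin[of z] nm[of z] unfolding kr_def by (cases "K z") auto
  define J where "J z = kr z + \<alpha> / 2 * (norm (?P z))\<^sup>2" for z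
  obtain c0 where c0: "\<And>z. ereal c0 \<le> K z" using bb unfolding bounded_below_fun_def by blast
  have Jc: "c0 \<le> J z" for z
  proof -
    have "c0 \<le> kr z" using c0[of z] Kr[of z] by simp
    moreover have "0 \<le> \<alpha> / 2 * (norm (?P z))\<^sup>2" using al by simp
    ultimately show ?thesis unfolding J_def by linarith
  qed
  define v where "v = Inf (J ` M)"
  have M0: "0 \<in> M" using M by (rule subspace_0)
  have bdd: "bdd_below (J ` M)" by (rule bdd_belowI[of _ c0]) (use Jc in auto)
  have vle: "v \<le> J m" if "m \<in> M" for m unfolding v_def using bdd that by (simp add: cInf_lower)
  have cvr: "\<And>x y t. 0 \<le> t \<and> t \<le> 1 \<Longrightarrow> K ((1 - t) *\<^sub>R x + t *\<^sub>R y) \<le> ereal (1 - t) * K x + ereal t * K y"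
    using cv unfolding convex_fun_def by blast
  have Jconv: "J ((1 - t) *\<^sub>R x1 + t *\<^sub>R x2) \<le> (1 - t) * J x1 + t * J x2"
    if t: "0 \<le> t" "t \<le> 1" for t x1 x2
  proof -
    have "K ((1 - t) *\<^sub>R x1 + t *\<^sub>R x2) \<le> ereal (1 - t) * K x1 + ereal t * K x2"
      by (rule cvr) (use t in simp)
    then have k: "kr ((1 - t) *\<^sub>R x1 + t *\<^sub>R x2) \<le> (1 - t) * kr x1 + t * kr x2"
      unfolding Kr by simp
    have p: "?P ((1 - t) *\<^sub>R x1 + t *\<^sub>R x2) = (1 - t) *\<^sub>R ?P x1 + t *\<^sub>R ?P x2"
      by (simp add: proj_add[OF M] proj_scale[OF M])
    have "(norm (?P ((1 - t) *\<^sub>R x1 + t *\<^sub>R x2)))\<^sup>2 \<le> (1 - t) * (norm (?P x1))\<^sup>2 + t * (norm (?P x2))\<^sup>2"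
      unfolding p by (rule norm_sq_convex[OF t])
    then have "\<alpha> / 2 * (norm (?P ((1 - t) *\<^sub>R x1 + t *\<^sub>R x2)))\<^sup>2
        \<le> \<alpha> / 2 * ((1 - t) * (norm (?P x1))\<^sup>2 + t * (norm (?P x2))\<^sup>2)"
      using al by (intro mult_left_mono) auto
    then show ?thesis unfolding J_def by (rule lin3[OF k])
  qed
  define S :: "('a \<times> real) set" where "S = M \<times> {..<v}"
  define T :: "('a \<times> real) set" where "T = {p. J (fst p) \<le> snd p}"
  have cS: "convex S" unfolding S_def by (intro convex_Times subspace_imp_convex[OF M]) simp
  have cT: "convex T"
  proof (rule convexI)
    fix p q :: "'a \<times> real" and u w :: real
    assume pq: "p \<in> T" "q \<in> T" and uw0: "0 \<le> u" "0 \<le> w" "u + w = 1"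
    then have uw: "0 \<le> u \<and> 0 \<le> w \<and> u + w = 1" by simp
    then have u: "u = 1 - w" by simp
    have "J (fst (u *\<^sub>R p + w *\<^sub>R q)) = J ((1 - w) *\<^sub>R fst p + w *\<^sub>R fst q)" by (simp add: u)
    also have "\<dots> \<le> (1 - w) * J (fst p) + w * J (fst q)" using uw by (intro Jconv) auto
    also have "\<dots> \<le> (1 - w) * snd p + w * snd q"
      using pq uw by (intro add_mono mult_left_mono) (auto simp: T_def)
    also have "\<dots> = snd (u *\<^sub>R p + w *\<^sub>R q)" by (simp add: u)
    finally show "u *\<^sub>R p + w *\<^sub>R q \<in> T" unfolding T_def by simp
  qed
  have neS: "S \<noteq> {}" unfolding S_def using M0 by (auto intro!: exI[of _ "(0, v - 1)"])
  have neT: "T \<noteq> {}" unfolding T_def by (auto intro!: exI[of _ "(0, J 0)"])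
  have dis: "S \<inter> T = {}" unfolding S_def T_def using vle by force
  obtain ab bb where ab0: "ab \<noteq> 0" and hS: "\<forall>p\<in>S. inner ab p \<le> bb" and hT: "\<forall>p\<in>T. inner ab p \<ge> bb"
    using separating_hyperplane_sets[OF cS cT neS neT dis] by blast
  obtain a \<beta> where ab: "ab = (a, \<beta>)" by (cases ab)
  have hS': "inner a m + \<beta> * r \<le> bb" if "m \<in> M" "r < v" for m r
    using hS that unfolding S_def ab by auto
  have hT': "inner a z + \<beta> * J z \<ge> bb" for z
    using hT unfolding T_def ab by auto
  have b0: "\<beta> \<ge> 0"
  proof (rule ccontr)
    assume "\<not> \<beta> \<ge> 0"
    then have bn: "\<beta> < 0" by simp
    define r where "r = min (v - 1) ((bb + 1) / \<beta>)"
    have "r < v" by (simp add: r_def)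
    have "r \<le> (bb + 1) / \<beta>" by (simp add: r_def)
    then have "\<beta> * r \<ge> \<beta> * ((bb + 1) / \<beta>)" using bn by (intro mult_left_mono_neg) auto
    then have "\<beta> * r \<ge> bb + 1" using bn by simp
    with hS'[OF M0 \<open>r < v\<close>] show False by simp
  qed
  have aN: "a \<in> ?N" unfolding orth_comp_def
  proof (intro CollectI ballI)
    fix m assume m: "m \<in> M"
    show "inner a m = 0"
    proof (rule ccontr)
      assume ne: "inner a m \<noteq> 0"
      define l where "l = (bb - \<beta> * (v - 1) + 1) / inner a m"
      have "l *\<^sub>R m \<in> M" using m M by (simp add: subspace_scale)
      from hS'[OF this, of "v - 1"] have "inner a (l *\<^sub>R m) + \<beta> * (v - 1) \<le> bb" by simp
      moreover have "inner a (l *\<^sub>R m) = bb - \<beta> * (v - 1) + 1" using ne by (simp add: l_def)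
      ultimately show False by simp
    qed
  qed
  have bpos: "\<beta> > 0"
  proof (rule ccontr)
    assume "\<not> \<beta> > 0"
    then have b00: "\<beta> = 0" using b0 by simp
    then have a0: "a \<noteq> 0" using ab0 ab by (auto simp: zero_prod_def)
    define z where "z = - ((\<bar>bb\<bar> + 1) / inner a a) *\<^sub>R a"
    have "inner a z = - (\<bar>bb\<bar> + 1)" using a0 by (simp add: z_def)
    with hT'[of z] b00 show False by simp
  qed
  have bv: "\<beta> * v \<le> bb"
  proof (rule ccontr)
    assume "\<not> \<beta> * v \<le> bb"
    then have lt: "bb / \<beta> < v" using bpos by (simp add: divide_less_eq mult.commute)
    define r where "r = (bb / \<beta> + v) / 2"
    have "r < v" using lt by (simp add: r_def)
    have gen: "\<forall>q::real. q < v \<longrightarrow> q < (q + v) / 2" by auto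
    have "bb / \<beta> < r" unfolding r_def using gen lt by blast
    then have "bb < \<beta> * r" using bpos by (simp add: divide_less_eq mult.commute)
    with hS'[OF M0 \<open>r < v\<close>] show False by simp
  qed
  define L where "L = (1 / \<beta>) *\<^sub>R a"
  have LN: "L \<in> ?N" unfolding L_def using aN N by (simp add: subspace_scale)
  have QL: "?Q L = L" by (rule proj_id[OF N LN])
  have lowL: "ereal v \<le> dual_h K \<alpha> M L"
    unfolding dual_h_def QL
  proof (rule INF_greatest)
    fix z
    have "\<beta> * v \<le> \<beta> * (J z + inner z L)"
      using bv hT'[of z] bpos by (simp add: L_def algebra_simps inner_commute)
    then have "v \<le> J z + inner z L" using bpos by simp
    then show "ereal v \<le> K z + ereal (\<alpha> / 2 * (norm (?P z))\<^sup>2 + inner z L)"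
      unfolding Kr J_def by simp
  qed
  have upp: "dual_h K \<alpha> M L' \<le> ereal v" for L'
  proof -
    have hm: "dual_h K \<alpha> M L' \<le> ereal (J m)" if m: "m \<in> M" for m
    proof -
      have "?Q L' \<in> ?N" by (rule proj_prop(1)[OF N])
      then have "inner m (?Q L') = 0" using m unfolding orth_comp_def by (simp add: inner_commute)
      then have "K m + ereal (\<alpha> / 2 * (norm (?P m))\<^sup>2 + inner m (?Q L')) = ereal (J m)"
        unfolding Kr J_def by simp
      moreover have "dual_h K \<alpha> M L' \<le> K m + ereal (\<alpha> / 2 * (norm (?P m))\<^sup>2 + inner m (?Q L'))"
        unfolding dual_h_def by (rule INF_lower) simp
      ultimately show ?thesis by simp
    qed
    show ?thesis
    proof (cases "dual_h K \<alpha> M L'")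
      case (real r)
      have "r \<le> v" unfolding v_def using M0 hm real by (auto intro!: cInf_greatest)
      then show ?thesis using real by simp
    next
      case PInf
      with hm[OF M0] show ?thesis by simp
    next
      case MInf then show ?thesis by simp
    qed
  qed
  show ?thesis using lowL upp order_trans by blast
qed

theorem corollary1:
  fixes K :: "'a::euclidean_space \<Rightarrow> ereal"
    and M :: "'a set"
    and \<alpha> :: real
    and x \<Lambda> :: "nat \<Rightarrow> 'a"
  assumes "subspace M"
    and "\<alpha> > 0"
    and "convex_fun K"
    and "feasible K"
    and "\<Lambda> 0 = 0"
    and "\<And>n y. K (x (Suc n)) + ereal (inner (x (Suc n)) (\<Lambda> n) + \<alpha> / 2 * (norm (x (Suc n)))\<^sup>2)
                 \<le> K y + ereal (inner y (\<Lambda> n) + \<alpha> / 2 * (norm y)\<^sup>2)"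
    and "\<And>n. \<Lambda> (Suc n) = \<Lambda> n + \<alpha> *\<^sub>R orth_proj (orth_comp M) (x (Suc n))"
  shows "((\<exists>\<Lambda>0. \<forall>\<Lambda>'. dual_h K \<alpha> M \<Lambda>' \<le> dual_h K \<alpha> M \<Lambda>0)
            \<longrightarrow> bounded (range (\<lambda>n. \<Lambda> (Suc n))))
       \<and> ((\<forall>z. K z \<noteq> \<infinity>)
            \<longrightarrow> (\<exists>\<Lambda>0. \<forall>\<Lambda>'. dual_h K \<alpha> M \<Lambda>' \<le> dual_h K \<alpha> M \<Lambda>0)
                \<and> bounded (range (\<lambda>n. \<Lambda> (Suc n))))"
proof -
  have pr: "proper_fun K" and bb: "bounded_below_fun K" using assms(4) unfolding feasible_def by auto
  have nm: "\<And>z. K z \<noteq> -\<infinity>" using pr unfolding proper_fun_def by auto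
  have P1: "(\<exists>\<Lambda>0. \<forall>\<Lambda>'. dual_h K \<alpha> M \<Lambda>' \<le> dual_h K \<alpha> M \<Lambda>0) \<longrightarrow> bounded (range (\<lambda>n. \<Lambda> (Suc n)))"
  proof
    assume "\<exists>\<Lambda>0. \<forall>\<Lambda>'. dual_h K \<alpha> M \<Lambda>' \<le> dual_h K \<alpha> M \<Lambda>0"
    then obtain \<Lambda>0 where mx: "\<And>\<Lambda>'. dual_h K \<alpha> M \<Lambda>' \<le> dual_h K \<alpha> M \<Lambda>0" by blast
    show "bounded (range (\<lambda>n. \<Lambda> (Suc n)))"
      by (rule part1[OF assms(1,2,3) pr assms(5,6,7) mx])
  qed
  have P2: "(\<forall>z. K z \<noteq> \<infinity>) \<longrightarrow> (\<exists>\<Lambda>0. \<forall>\<Lambda>'. dual_h K \<alpha> M \<Lambda>' \<le> dual_h K \<alpha> M \<Lambda>0)"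
    using part2[OF assms(1,2,3) bb _ nm] by blast
  show ?thesis using P1 P2 by blast
qed

end
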